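(* Let $X$ be a compact Hausdorff space and let $(\mathcal{A},\mathfrak{T})$ be a unital relaxed C*-algebra. Then the set $C(X)\boxtimes(\mathcal{A},\mathfrak{T})$ of all functions $f\colon X\to\mathcal{A}$ that are norm-bounded and continuous with respect to the relaxed topology $\mathfrak{T}$ is a C*-algebra with respect to the point-wise operations and the supremum norm $\|f\|_\infty=\sup_{x\in X}\|f(x)\|$.
   Context: A relaxed C*-algebra is a pair $(\mathcal{A},\mathfrak{T})$ where $\mathcal{A}$ is a unital C*-algebra and $\mathfrak{T}$ is a locally convex topology on $\mathcal{A}$ (the relaxed topology) determined by a separating family $S$ of norm-continuous seminorms on $\mathcal{A}$, such that multiplication, involution and addition of $\mathcal{A}$ are (jointly) continuous with respect to $\mathfrak{T}$. *)

theory Defs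
  imports "HOL-Analysis.Analysis"
begin

class unital_cstar_algebra = real_normed_algebra_1 + banach +
  fixes scaleC :: "complex \<Rightarrow> 'a \<Rightarrow> 'a"
    and star :: "'a \<Rightarrow> 'a"
  assumes scaleC_add_right: "scaleC c (x + y) = scaleC c x + scaleC c y"
    and scaleC_add_left: "scaleC (c + d) x = scaleC c x + scaleC d x"
    and scaleC_scaleC: "scaleC c (scaleC d x) = scaleC (c * d) x"
    and scaleC_one: "scaleC 1 x = x"
    and scaleR_scaleC: "scaleR r x = scaleC (complex_of_real r) x"
    and norm_scaleC: "norm (scaleC c x) = cmod c * norm x"
    and mult_scaleC_left: "scaleC c x * y = scaleC c (x * y)"
    and mult_scaleC_right: "x * scaleC c y = scaleC c (x * y)"
    and star_star: "star (star x) = x"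
    and star_add: "star (x + y) = star x + star y"
    and star_scaleC: "star (scaleC c x) = scaleC (cnj c) (star x)"
    and star_mult: "star (x * y) = star y * star x"
    and cstar_identity: "norm (star x * x) = norm x ^ 2"

definition cstar_algebra_on ::
  "'b set \<Rightarrow> ('b \<Rightarrow> 'b \<Rightarrow> 'b) \<Rightarrow> 'b \<Rightarrow> ('b \<Rightarrow> 'b) \<Rightarrow> (complex \<Rightarrow> 'b \<Rightarrow> 'b)
    \<Rightarrow> ('b \<Rightarrow> 'b \<Rightarrow> 'b) \<Rightarrow> ('b \<Rightarrow> 'b) \<Rightarrow> ('b \<Rightarrow> real) \<Rightarrow> bool" where
  "cstar_algebra_on C ad zr ng scl mul sr nm \<longleftrightarrow>
     \<comment> \<open>closure\<close>
     zr \<in> C \<and>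
     (\<forall>x\<in>C. \<forall>y\<in>C. ad x y \<in> C \<and> mul x y \<in> C) \<and>
     (\<forall>x\<in>C. ng x \<in> C \<and> sr x \<in> C \<and> (\<forall>c. scl c x \<in> C)) \<and>
     \<comment> \<open>complex associative algebra\<close>
     (\<forall>x\<in>C. \<forall>y\<in>C. \<forall>z\<in>C.
        ad (ad x y) z = ad x (ad y z) \<and>
        mul (mul x y) z = mul x (mul y z) \<and>
        mul x (ad y z) = ad (mul x y) (mul x z) \<and>
        mul (ad x y) z = ad (mul x z) (mul y z)) \<and>
     (\<forall>x\<in>C. \<forall>y\<in>C. ad x y = ad y x) \<and>
     (\<forall>x\<in>C. ad zr x = x \<and> ad (ng x) x = zr) \<and>
     (\<forall>x\<in>C. \<forall>y\<in>C. \<forall>a b.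
        scl a (ad x y) = ad (scl a x) (scl a y) \<and>
        scl (a + b) x = ad (scl a x) (scl b x) \<and>
        scl a (scl b x) = scl (a * b) x \<and>
        scl 1 x = x \<and>
        mul (scl a x) y = scl a (mul x y) \<and>
        mul x (scl a y) = scl a (mul x y)) \<and>
     \<comment> \<open>involution\<close>
     (\<forall>x\<in>C. \<forall>y\<in>C. \<forall>a.
        sr (sr x) = x \<and>
        sr (ad x y) = ad (sr x) (sr y) \<and>
        sr (scl a x) = scl (cnj a) (sr x) \<and>
        sr (mul x y) = mul (sr y) (sr x)) \<and>
     \<comment> \<open>submultiplicative norm with the C*-identity\<close>
     (\<forall>x\<in>C. \<forall>y\<in>C. \<forall>a.
        (nm x = 0 \<longleftrightarrow> x = zr) \<and>
        nm (ad x y) \<le> nm x + nm y \<and>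
        nm (scl a x) = cmod a * nm x \<and>
        nm (mul x y) \<le> nm x * nm y \<and>
        nm (mul (sr x) x) = (nm x) ^ 2) \<and>
     \<comment> \<open>completeness\<close>
     (\<forall>s. (\<forall>n. s n \<in> C) \<and>
          (\<forall>e>0. \<exists>N. \<forall>m\<ge>N. \<forall>n\<ge>N. nm (ad (s m) (ng (s n))) < e)
          \<longrightarrow> (\<exists>l\<in>C. (\<lambda>n. nm (ad (s n) (ng l))) \<longlonglongrightarrow> 0))"

definition is_seminorm :: "('a::unital_cstar_algebra \<Rightarrow> real) \<Rightarrow> bool" where
  "is_seminorm p \<longleftrightarrow> (\<forall>x. 0 \<le> p x) \<and> (\<forall>x y. p (x + y) \<le> p x + p y)
     \<and> (\<forall>c x. p (scaleC c x) = cmod c * p x)"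

definition relaxed_topology :: "('a::unital_cstar_algebra \<Rightarrow> real) set \<Rightarrow> 'a topology" where
  "relaxed_topology S = topology (\<lambda>U. \<forall>x\<in>U. \<exists>F. finite F \<and> F \<subseteq> S \<and>
      (\<exists>e>0. {y. \<forall>p\<in>F. p (y - x) < e} \<subseteq> U))"

definition relaxed_cstar_algebra :: "('a::unital_cstar_algebra \<Rightarrow> real) set \<Rightarrow> bool" where
  "relaxed_cstar_algebra S \<longleftrightarrow>
     (\<forall>p\<in>S. is_seminorm p \<and> continuous_on UNIV p) \<and>
     (\<forall>x. x \<noteq> 0 \<longrightarrow> (\<exists>p\<in>S. p x \<noteq> 0)) \<and>
     continuous_map (prod_topology (relaxed_topology S) (relaxed_topology S)) (relaxed_topology S)
        (\<lambda>(x, y). x + y) \<and>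
     continuous_map (prod_topology (relaxed_topology S) (relaxed_topology S)) (relaxed_topology S)
        (\<lambda>(x, y). x * y) \<and>
     continuous_map (relaxed_topology S) (relaxed_topology S) star"

text \<open>C(X) boxtimes (A, T): norm-bounded, T-continuous functions on the topological space X,
  made extensional (value 0 outside topspace X).\<close>

definition boxtimes :: "'x topology \<Rightarrow> ('a::unital_cstar_algebra \<Rightarrow> real) set \<Rightarrow> ('x \<Rightarrow> 'a) set" where
  "boxtimes X S = {f. continuous_map X (relaxed_topology S) f \<and>
       bounded (f ` topspace X) \<and> (\<forall>x. x \<notin> topspace X \<longrightarrow> f x = 0)}"

definition sup_norm :: "'x topology \<Rightarrow> ('x \<Rightarrow> 'a::real_normed_vector) \<Rightarrow> real" where
  "sup_norm X f = Sup (insert 0 ((\<lambda>x. norm (f x)) ` topspace X))"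

end

theory Submission
  imports Defs
begin


lemma scaleC_zero_right[simp]: "scaleC c (0::'a::unital_cstar_algebra) = 0"
proof -
  have "scaleC c (0::'a) = scaleC c 0 + scaleC c 0"
    using scaleC_add_right[of c "0::'a" 0] by simp
  then show ?thesis by simp
qed

lemma scaleC_zero_left[simp]: "scaleC 0 (x::'a::unital_cstar_algebra) = 0"
  using scaleR_scaleC[of 0 x] by simp

lemma scaleC_minus_right: "scaleC c (- x::'a::unital_cstar_algebra) = - scaleC c x"
proof -
  have "scaleC c (-x) + scaleC c x = 0"
    using scaleC_add_right[of c "-x" x] by simp
  then show ?thesis by (simp add: eq_neg_iff_add_eq_0)
qed

lemma scaleC_diff_right: "scaleC c (x - y::'a::unital_cstar_algebra) = scaleC c x - scaleC c y"
  using scaleC_add_right[of c x "-y"] scaleC_minus_right[of c y] by simp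

lemma star_zero[simp]: "star (0::'a::unital_cstar_algebra) = 0"
proof -
  have "star (0::'a) = star 0 + star 0" using star_add[of "0::'a" 0] by simp
  then show ?thesis by simp
qed

lemma norm_star[simp]: "norm (star (x::'a::unital_cstar_algebra)) = norm x"
proof -
  have le: "norm y \<le> norm (star y)" for y :: 'a
  proof (cases "y = 0")
    case False
    have "norm y ^ 2 \<le> norm (star y) * norm y"
      using cstar_identity[of y] norm_mult_ineq[of "star y" y] by simp
    then show ?thesis using False by (simp add: power2_eq_square)
  qed simp
  show ?thesis using le[of x] le[of "star x"] by (simp add: star_star)
qed

lemma semi_zero: "is_seminorm p \<Longrightarrow> p 0 = 0"
  unfolding is_seminorm_def using scaleC_zero_left[of "0::'a::unital_cstar_algebra"]
  by (metis mult_zero_left norm_zero)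

lemma semi_minus: "is_seminorm p \<Longrightarrow> p (- x) = p (x::'a::unital_cstar_algebra)"
proof -
  assume p: "is_seminorm p"
  have "- x = scaleC (-1) x" using scaleR_scaleC[of "-1" x] by simp
  then show ?thesis using p unfolding is_seminorm_def by simp
qed

lemma semi_commute: "is_seminorm p \<Longrightarrow> p (x - y) = p (y - (x::'a::unital_cstar_algebra))"
  using semi_minus[of p "x - y"] by simp

lemma semi_tri: "is_seminorm p \<Longrightarrow> p (a - c) \<le> p (a - b) + p (b - (c::'a::unital_cstar_algebra))"
  unfolding is_seminorm_def by (metis diff_add_cancel add_diff_eq diff_diff_eq2)

lemma semi_scale: "is_seminorm p \<Longrightarrow> p (scaleC c a - scaleC c b) = cmod c * p (a - (b::'a::unital_cstar_algebra))"
  unfolding is_seminorm_def by (simp add: scaleC_diff_right[symmetric])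

definition rbasic where "rbasic F e a = {y. \<forall>p\<in>F. p (y - a) < e}"

lemma istop_relaxed: "istopology (\<lambda>U::'a::unital_cstar_algebra set. \<forall>x\<in>U. \<exists>F. finite F \<and> F \<subseteq> S \<and>
      (\<exists>e>0. {y. \<forall>p\<in>F. p (y - x) < e} \<subseteq> U))" for S :: "('a::unital_cstar_algebra \<Rightarrow> real) set"
  unfolding istopology_def
proof (intro conjI allI impI)
  fix U V :: "'a set"
  assume U: "\<forall>x\<in>U. \<exists>F. finite F \<and> F \<subseteq> S \<and> (\<exists>e>0. {y. \<forall>p\<in>F. p (y - x) < e} \<subseteq> U)"
    and V: "\<forall>x\<in>V. \<exists>F. finite F \<and> F \<subseteq> S \<and> (\<exists>e>0. {y. \<forall>p\<in>F. p (y - x) < e} \<subseteq> V)"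
  show "\<forall>x\<in>U \<inter> V. \<exists>F. finite F \<and> F \<subseteq> S \<and> (\<exists>e>0. {y. \<forall>p\<in>F. p (y - x) < e} \<subseteq> U \<inter> V)"
  proof
    fix x assume "x \<in> U \<inter> V"
    then obtain F1 F2 and e1 e2 :: real where "finite F1" "F1 \<subseteq> S" "e1 > 0" "{y. \<forall>p\<in>F1. p (y - x) < e1} \<subseteq> U"
      "finite F2" "F2 \<subseteq> S" "e2 > 0" "{y. \<forall>p\<in>F2. p (y - x) < e2} \<subseteq> V"
      using U V by (meson IntD1 IntD2)
    then show "\<exists>F. finite F \<and> F \<subseteq> S \<and> (\<exists>e>0. {y. \<forall>p\<in>F. p (y - x) < e} \<subseteq> U \<inter> V)"
      proof (intro exI[of _ "F1 \<union> F2"] conjI exI[of _ "min e1 e2"])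
      show "{y. \<forall>p\<in>F1 \<union> F2. p (y - x) < min e1 e2} \<subseteq> U \<inter> V"
      proof
        fix y assume y: "y \<in> {y. \<forall>p\<in>F1 \<union> F2. p (y - x) < min e1 e2}"
        have "p (y - x) < e1" if "p \<in> F1" for p using y that by (metis (no_types, lifting) UnI1 mem_Collect_eq min_less_iff_conj)
        moreover have "p (y - x) < e2" if "p \<in> F2" for p using y that by (metis (no_types, lifting) UnI2 mem_Collect_eq min_less_iff_conj)
        ultimately have "y \<in> {y. \<forall>p\<in>F1. p (y - x) < e1}" "y \<in> {y. \<forall>p\<in>F2. p (y - x) < e2}" by auto
        then show "y \<in> U \<inter> V" using \<open>{y. \<forall>p\<in>F1. p (y - x) < e1} \<subseteq> U\<close> \<open>{y. \<forall>p\<in>F2. p (y - x) < e2} \<subseteq> V\<close> by blast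
      qed
    qed (use \<open>finite F1\<close> \<open>finite F2\<close> \<open>F1 \<subseteq> S\<close> \<open>F2 \<subseteq> S\<close> \<open>e1 > 0\<close> \<open>e2 > 0\<close> in auto)
  qed
next
  fix K :: "'a set set"
  assume "\<forall>U\<in>K. \<forall>x\<in>U. \<exists>F. finite F \<and> F \<subseteq> S \<and> (\<exists>e>0. {y. \<forall>p\<in>F. p (y - x) < e} \<subseteq> U)"
  then show "\<forall>x\<in>\<Union>K. \<exists>F. finite F \<and> F \<subseteq> S \<and> (\<exists>e>0. {y. \<forall>p\<in>F. p (y - x) < e} \<subseteq> \<Union>K)"
    by (meson UnionE Union_upper order_trans)
qed

lemma openin_relaxed: "openin (relaxed_topology S) U \<longleftrightarrow> (\<forall>x\<in>U. \<exists>F. finite F \<and> F \<subseteq> S \<and>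
      (\<exists>e>0. {y. \<forall>p\<in>F. p (y - x) < e} \<subseteq> U))"
  unfolding relaxed_topology_def using topology_inverse'[OF istop_relaxed[of S]] by simp

lemma topspace_relaxed[simp]: "topspace (relaxed_topology S) = UNIV"
proof -
  have "openin (relaxed_topology S) UNIV" unfolding openin_relaxed
    by (intro ballI exI[of _ "{}"] conjI exI[of _ 1]) auto
  then show ?thesis using openin_subset by blast
qed

lemma basic_open:
  fixes S :: "('a::unital_cstar_algebra \<Rightarrow> real) set" and e :: real
  assumes S: "\<forall>p\<in>S. is_seminorm p" and F: "finite F" "F \<subseteq> S" and e: "e > 0"
  shows "openin (relaxed_topology S) {y. \<forall>p\<in>F. p (y - a) < e}"
  unfolding openin_relaxed
proof
  fix z assume z: "z \<in> {y. \<forall>p\<in>F. p (y - a) < e}"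
  define M where "M = Max (insert 0 ((\<lambda>p. p (z - a)) ` F))"
  have fin: "finite (insert 0 ((\<lambda>p. p (z - a)) ` F))" using F by simp
  have "M \<in> insert 0 ((\<lambda>p. p (z - a)) ` F)" unfolding M_def using fin Max_in by blast
  then have Me: "M < e" using z e by auto
  have Mge: "p (z - a) \<le> M" if "p \<in> F" for p unfolding M_def using fin that by simp
  show "\<exists>F'. finite F' \<and> F' \<subseteq> S \<and> (\<exists>e'>0. {y. \<forall>p\<in>F'. p (y - z) < e'} \<subseteq> {y. \<forall>p\<in>F. p (y - a) < e})"
  proof (intro exI[of _ F] conjI exI[of _ "e - M"])
    show "{y. \<forall>p\<in>F. p (y - z) < e - M} \<subseteq> {y. \<forall>p\<in>F. p (y - a) < e}"
    proof safe
      fix y p assume "\<forall>p\<in>F. p (y - z) < e - M" "p \<in> F"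
      moreover have "p (y - a) \<le> p (y - z) + p (z - a)" using semi_tri S F \<open>p \<in> F\<close> by blast
      moreover have "p (y - z) < e - M" using calculation(1,2) by blast
      ultimately show "p (y - a) < e" using Mge[of p] by linarith
    qed
  qed (use F Me in auto)
qed

lemma cm_relaxedI:
  fixes S :: "('a::unital_cstar_algebra \<Rightarrow> real) set" and f :: "'x \<Rightarrow> 'a"
  assumes "\<And>x F (e::real). x \<in> topspace X \<Longrightarrow> finite F \<Longrightarrow> F \<subseteq> S \<Longrightarrow> e > 0 \<Longrightarrow>
     \<exists>V. openin X V \<and> x \<in> V \<and> (\<forall>y\<in>V. \<forall>p\<in>F. p (f y - f x) < e)"
  shows "continuous_map X (relaxed_topology S) f"
  unfolding continuous_map_def
proof (intro conjI allI impI)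
  fix U assume "openin (relaxed_topology S) U"
  then have U: "\<forall>x\<in>U. \<exists>F. finite F \<and> F \<subseteq> S \<and> (\<exists>e>0. {y. \<forall>p\<in>F. p (y - x) < e} \<subseteq> U)"
    by (simp add: openin_relaxed)
  show "openin X {x \<in> topspace X. f x \<in> U}"
  proof (rule openin_subopen[THEN iffD2], intro ballI)
    fix x assume x: "x \<in> {x \<in> topspace X. f x \<in> U}"
    then have "f x \<in> U" by simp
    then obtain F e where F: "finite F" "F \<subseteq> S" "e > 0" "{y. \<forall>p\<in>F. p (y - f x) < e} \<subseteq> U"
      using U by (meson bspec)
    then obtain V where V: "openin X V" "x \<in> V" "\<forall>y\<in>V. \<forall>p\<in>F. p (f y - f x) < e"
      using assms[of x F e] x by blast
    show "\<exists>T. openin X T \<and> x \<in> T \<and> T \<subseteq> {x \<in> topspace X. f x \<in> U}"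
    proof (intro exI[of _ V] conjI subsetI)
      fix y assume "y \<in> V"
      then have "y \<in> topspace X" "f y \<in> {y. \<forall>p\<in>F. p (y - f x) < e}" using openin_subset[OF V(1)] V(3) by auto
      then show "y \<in> {x \<in> topspace X. f x \<in> U}" using F(4) by blast
    qed (use V in auto)
  qed
qed auto

lemma cm_relaxedD:
  fixes S :: "('a::unital_cstar_algebra \<Rightarrow> real) set" and f :: "'x \<Rightarrow> 'a" and e :: real
  assumes f: "continuous_map X (relaxed_topology S) f" and S: "\<forall>p\<in>S. is_seminorm p"
    and x: "x \<in> topspace X" and F: "finite F" "F \<subseteq> S" and e: "e > 0"
  shows "\<exists>V. openin X V \<and> x \<in> V \<and> (\<forall>y\<in>V. \<forall>p\<in>F. p (f y - f x) < e)"
proof -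
  have "openin X {y \<in> topspace X. f y \<in> {z. \<forall>p\<in>F. p (z - f x) < e}}"
    using f basic_open[OF S F e, of "f x"] unfolding continuous_map_def by blast
  moreover have "x \<in> {y \<in> topspace X. f y \<in> {z. \<forall>p\<in>F. p (z - f x) < e}}"
  proof -
    have "\<forall>p\<in>F. p (f x - f x) < e" using e F S semi_zero by (metis diff_self subsetD)
    then show ?thesis using x by simp
  qed
  ultimately show ?thesis by (intro exI[of _ "{y \<in> topspace X. f y \<in> {z. \<forall>p\<in>F. p (z - f x) < e}}"]) auto
qed



lemma bounded_normI: "(\<And>x. x \<in> A \<Longrightarrow> norm (f x) \<le> B) \<Longrightarrow> bounded (f ` A)"
  unfolding bounded_iff by blast

lemma bounded_normE:
  assumes "bounded (f ` A)"
  obtains B where "B \<ge> 0" "\<And>x. x \<in> A \<Longrightarrow> norm (f x) \<le> B"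
proof -
  obtain B where "\<forall>y\<in>f ` A. norm y \<le> B" using assms unfolding bounded_iff by blast
  then show ?thesis using that[of "max 0 B"] by force
qed

lemma sn_bdd:
  assumes "bounded (f ` topspace X)"
  shows "bdd_above (insert 0 ((\<lambda>x. norm (f x)) ` topspace X))"
proof -
  obtain B where "B \<ge> 0" "\<And>x. x \<in> topspace X \<Longrightarrow> norm (f x) \<le> B"
    using bounded_normE[OF assms] by blast
  then show ?thesis by (intro bdd_aboveI[of _ B]) auto
qed

lemma sn_ge:
  assumes "bounded (f ` topspace X)" "x \<in> topspace X"
  shows "norm (f x) \<le> sup_norm X f"
  unfolding sup_norm_def by (rule cSup_upper[OF _ sn_bdd[OF assms(1)]]) (use assms(2) in auto)

lemma sn_nonneg:
  assumes "bounded (f ` topspace X)"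
  shows "0 \<le> sup_norm X f"
  unfolding sup_norm_def by (rule cSup_upper[OF _ sn_bdd[OF assms(1)]]) auto

lemma sn_le:
  assumes "0 \<le> M" "\<And>x. x \<in> topspace X \<Longrightarrow> norm (f x) \<le> M"
  shows "sup_norm X f \<le> M"
  unfolding sup_norm_def by (rule cSup_least) (use assms in auto)

lemma mem_box: "f \<in> boxtimes X S \<longleftrightarrow> continuous_map X (relaxed_topology S) f \<and>
    bounded (f ` topspace X) \<and> (\<forall>x. x \<notin> topspace X \<longrightarrow> f x = 0)"
  by (simp add: boxtimes_def)

lemma neg_scaleC: "- x = scaleC (-1) (x::'a::unital_cstar_algebra)"
  using scaleR_scaleC[of "-1" x] by simp

context
  fixes S :: "('a::unital_cstar_algebra \<Rightarrow> real) set" and X :: "'x topology"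
  assumes rel: "relaxed_cstar_algebra S"
begin

lemma Ssemi: "\<forall>p\<in>S. is_seminorm p"
  using rel unfolding relaxed_cstar_algebra_def by blast

lemma Scont: "p \<in> S \<Longrightarrow> continuous_on UNIV p"
  using rel unfolding relaxed_cstar_algebra_def by blast

lemma box_zero: "(\<lambda>x. 0) \<in> boxtimes X S"
  unfolding mem_box by (auto simp: continuous_map_const intro!: bounded_normI[of _ _ 0])

lemma box_add:
  assumes f: "f \<in> boxtimes X S" and g: "g \<in> boxtimes X S"
  shows "(\<lambda>x. f x + g x) \<in> boxtimes X S"
proof -
  have c: "continuous_map (prod_topology (relaxed_topology S) (relaxed_topology S)) (relaxed_topology S)
        (\<lambda>(x, y). x + y)" using rel unfolding relaxed_cstar_algebra_def by blast
  have "continuous_map X (relaxed_topology S) ((\<lambda>(x, y). x + y) \<circ> (\<lambda>x. (f x, g x)))"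
    by (rule continuous_map_compose[OF continuous_map_pairedI c]) (use f g mem_box in auto)
  moreover have "((\<lambda>(x, y). x + y) \<circ> (\<lambda>x. (f x, g x))) = (\<lambda>x. f x + g x)" by auto
  moreover obtain B1 where "\<And>x. x \<in> topspace X \<Longrightarrow> norm (f x) \<le> B1"
    using f bounded_normE mem_box by metis
  moreover obtain B2 where "\<And>x. x \<in> topspace X \<Longrightarrow> norm (g x) \<le> B2"
    using g bounded_normE mem_box by metis
  ultimately show ?thesis using f g unfolding mem_box
    by (auto intro!: bounded_normI[of _ _ "B1 + B2"] norm_triangle_le add_mono)
qed

lemma box_mul:
  assumes f: "f \<in> boxtimes X S" and g: "g \<in> boxtimes X S"
  shows "(\<lambda>x. f x * g x) \<in> boxtimes X S"
proof -
  have c: "continuous_map (prod_topology (relaxed_topology S) (relaxed_topology S)) (relaxed_topology S)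
        (\<lambda>(x, y). x * y)" using rel unfolding relaxed_cstar_algebra_def by blast
  have "continuous_map X (relaxed_topology S) ((\<lambda>(x, y). x * y) \<circ> (\<lambda>x. (f x, g x)))"
    by (rule continuous_map_compose[OF continuous_map_pairedI c]) (use f g mem_box in auto)
  moreover have "((\<lambda>(x, y). x * y) \<circ> (\<lambda>x. (f x, g x))) = (\<lambda>x. f x * g x)" by auto
  moreover obtain B1 where B1: "B1 \<ge> 0" "\<And>x. x \<in> topspace X \<Longrightarrow> norm (f x) \<le> B1"
    using f bounded_normE mem_box by metis
  moreover obtain B2 where B2: "B2 \<ge> 0" "\<And>x. x \<in> topspace X \<Longrightarrow> norm (g x) \<le> B2"
    using g bounded_normE mem_box by metis
  moreover have "norm (f x * g x) \<le> B1 * B2" if "x \<in> topspace X" for x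
    using norm_mult_ineq[of "f x" "g x"] mult_mono[OF B1(2)[OF that] B2(2)[OF that] B1(1) norm_ge_zero]
    by linarith
  ultimately show ?thesis using f g unfolding mem_box
    by (auto intro!: bounded_normI[of _ _ "B1 * B2"])
qed

lemma box_star:
  assumes f: "f \<in> boxtimes X S"
  shows "(\<lambda>x. star (f x)) \<in> boxtimes X S"
proof -
  have c: "continuous_map (relaxed_topology S) (relaxed_topology S) star"
    using rel unfolding relaxed_cstar_algebra_def by blast
  have "continuous_map X (relaxed_topology S) (star \<circ> f)"
    by (rule continuous_map_compose[OF _ c]) (use f mem_box in auto)
  moreover have "star \<circ> f = (\<lambda>x. star (f x))" by auto
  moreover obtain B1 where "\<And>x. x \<in> topspace X \<Longrightarrow> norm (f x) \<le> B1"
    using f bounded_normE mem_box by metis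
  ultimately show ?thesis using f unfolding mem_box
    by (auto intro!: bounded_normI[of _ _ "B1"])
qed

lemma box_scale:
  assumes f: "f \<in> boxtimes X S"
  shows "(\<lambda>x. scaleC c (f x)) \<in> boxtimes X S"
proof -
  have cf: "continuous_map X (relaxed_topology S) f" using f mem_box by blast
  have "continuous_map X (relaxed_topology S) (\<lambda>x. scaleC c (f x))"
  proof (rule cm_relaxedI)
    fix x F and e :: real
    assume x: "x \<in> topspace X" and F: "finite F" "F \<subseteq> S" and e: "e > 0"
    have cp: "cmod c + 1 > 0" by (smt (verit) norm_ge_zero)
    have e': "e / (cmod c + 1) > 0" using e cp by (rule divide_pos_pos)
    obtain V where V: "openin X V" "x \<in> V" "\<forall>y\<in>V. \<forall>p\<in>F. p (f y - f x) < e / (cmod c + 1)"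
      using cm_relaxedD[OF cf Ssemi x F e'] by blast
    show "\<exists>V. openin X V \<and> x \<in> V \<and> (\<forall>y\<in>V. \<forall>p\<in>F. p (scaleC c (f y) - scaleC c (f x)) < e)"
    proof (intro exI[of _ V] conjI ballI)
      fix y p assume y: "y \<in> V" and p: "p \<in> F"
      have sp: "is_seminorm p" using Ssemi F p by blast
      have lt: "p (f y - f x) < e / (cmod c + 1)" using V(3) y p by blast
      have nn: "0 \<le> p (f y - f x)" using sp unfolding is_seminorm_def by blast
      have "p (scaleC c (f y) - scaleC c (f x)) = cmod c * p (f y - f x)"
        using semi_scale[OF sp] by blast
      also have "\<dots> \<le> (cmod c + 1) * p (f y - f x)" using nn by (simp add: distrib_right)
      also have "\<dots> < (cmod c + 1) * (e / (cmod c + 1))"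
        using lt cp by (intro mult_strict_left_mono) auto
      also have "\<dots> = e" using cp by simp
      finally show "p (scaleC c (f y) - scaleC c (f x)) < e" .
    qed (use V in auto)
  qed
  moreover obtain B1 where "\<And>x. x \<in> topspace X \<Longrightarrow> norm (f x) \<le> B1"
    using f bounded_normE mem_box by metis
  ultimately show ?thesis using f unfolding mem_box
    by (auto intro!: bounded_normI[of _ _ "cmod c * B1"] mult_left_mono simp: norm_scaleC)
qed

lemma box_neg:
  assumes f: "f \<in> boxtimes X S"
  shows "(\<lambda>x. - f x) \<in> boxtimes X S"
  using box_scale[OF f, of "-1"] by (simp add: neg_scaleC[symmetric])

end


lemma box_bounded: "f \<in> boxtimes X S \<Longrightarrow> bounded (f ` topspace X)"
  by (simp add: mem_box)

lemma sn_zero_iff: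
  fixes f :: "'x \<Rightarrow> 'a::unital_cstar_algebra"
  assumes f: "f \<in> boxtimes X S"
  shows "sup_norm X f = 0 \<longleftrightarrow> f = (\<lambda>x. 0)"
proof
  assume h: "sup_norm X f = 0"
  show "f = (\<lambda>x. 0)"
  proof
    fix x show "f x = 0"
    proof (cases "x \<in> topspace X")
      case True
      then show ?thesis using sn_ge[OF box_bounded[OF f] True] h by simp
    next
      case False
      then show ?thesis using f by (simp add: mem_box)
    qed
  qed
next
  assume "f = (\<lambda>x. 0)"
  moreover have "sup_norm X (\<lambda>x. 0::'a) = 0"
    by (rule antisym[OF sn_le sn_nonneg]) (auto intro: bounded_normI[of _ _ 0])
  ultimately show "sup_norm X f = 0" by simp
qed

lemma sn_add:
  assumes f: "f \<in> boxtimes X S" and g: "g \<in> boxtimes X S"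
  shows "sup_norm X (\<lambda>x. f x + g x) \<le> sup_norm X f + sup_norm X g"
proof (rule sn_le)
  show "0 \<le> sup_norm X f + sup_norm X g"
    using sn_nonneg[OF box_bounded[OF f]] sn_nonneg[OF box_bounded[OF g]] by simp
  fix x assume x: "x \<in> topspace X"
  show "norm (f x + g x) \<le> sup_norm X f + sup_norm X g"
    using norm_triangle_ineq[of "f x" "g x"] sn_ge[OF box_bounded[OF f] x] sn_ge[OF box_bounded[OF g] x]
    by linarith
qed

lemma sn_mul:
  assumes f: "f \<in> boxtimes X S" and g: "g \<in> boxtimes X S"
  shows "sup_norm X (\<lambda>x. f x * g x) \<le> sup_norm X f * sup_norm X g"
proof (rule sn_le)
  show "0 \<le> sup_norm X f * sup_norm X g"
    using sn_nonneg[OF box_bounded[OF f]] sn_nonneg[OF box_bounded[OF g]] by simp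
  fix x assume x: "x \<in> topspace X"
  show "norm (f x * g x) \<le> sup_norm X f * sup_norm X g"
    using norm_mult_ineq[of "f x" "g x"]
      mult_mono[OF sn_ge[OF box_bounded[OF f] x] sn_ge[OF box_bounded[OF g] x]
        sn_nonneg[OF box_bounded[OF f]] norm_ge_zero]
    by linarith
qed

lemma sn_scale:
  fixes f :: "'x \<Rightarrow> 'a::unital_cstar_algebra"
  assumes f: "f \<in> boxtimes X S" and fs: "(\<lambda>x. scaleC c (f x)) \<in> boxtimes X S"
  shows "sup_norm X (\<lambda>x. scaleC c (f x)) = cmod c * sup_norm X f"
proof (rule antisym)
  show "sup_norm X (\<lambda>x. scaleC c (f x)) \<le> cmod c * sup_norm X f"
  proof (rule sn_le)
    show "0 \<le> cmod c * sup_norm X f" using sn_nonneg[OF box_bounded[OF f]] by simp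
    fix x assume x: "x \<in> topspace X"
    show "norm (scaleC c (f x)) \<le> cmod c * sup_norm X f"
      using sn_ge[OF box_bounded[OF f] x] by (simp add: norm_scaleC mult_left_mono)
  qed
next
  show "cmod c * sup_norm X f \<le> sup_norm X (\<lambda>x. scaleC c (f x))"
  proof (cases "c = 0")
    case True
    then show ?thesis using sn_nonneg[OF box_bounded[OF fs]] by simp
  next
    case False
    then have cp: "cmod c > 0" by simp
    have "sup_norm X f \<le> sup_norm X (\<lambda>x. scaleC c (f x)) / cmod c"
    proof (rule sn_le)
      show "0 \<le> sup_norm X (\<lambda>x. scaleC c (f x)) / cmod c"
        using sn_nonneg[OF box_bounded[OF fs]] cp by simp
      fix x assume x: "x \<in> topspace X"
      have "cmod c * norm (f x) \<le> sup_norm X (\<lambda>x. scaleC c (f x))"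
        using sn_ge[OF box_bounded[OF fs] x] by (simp add: norm_scaleC)
      then show "norm (f x) \<le> sup_norm X (\<lambda>x. scaleC c (f x)) / cmod c"
        using cp by (simp add: field_simps)
    qed
    then show ?thesis using cp by (simp add: field_simps)
  qed
qed

lemma sn_cstar:
  fixes f :: "'x \<Rightarrow> 'a::unital_cstar_algebra"
  assumes f: "f \<in> boxtimes X S" and fs: "(\<lambda>x. star (f x) * f x) \<in> boxtimes X S"
  shows "sup_norm X (\<lambda>x. star (f x) * f x) = (sup_norm X f) ^ 2"
proof (rule antisym)
  show "sup_norm X (\<lambda>x. star (f x) * f x) \<le> (sup_norm X f) ^ 2"
  proof (rule sn_le)
    fix x assume x: "x \<in> topspace X"
    show "norm (star (f x) * f x) \<le> (sup_norm X f) ^ 2"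
      using sn_ge[OF box_bounded[OF f] x] by (simp add: cstar_identity power_mono)
  qed simp
next
  have "sup_norm X f \<le> sqrt (sup_norm X (\<lambda>x. star (f x) * f x))"
  proof (rule sn_le)
    fix x assume x: "x \<in> topspace X"
    have "norm (f x) ^ 2 \<le> sup_norm X (\<lambda>x. star (f x) * f x)"
      using sn_ge[OF box_bounded[OF fs] x] by (simp add: cstar_identity)
    then show "norm (f x) \<le> sqrt (sup_norm X (\<lambda>x. star (f x) * f x))"
      using real_le_rsqrt by blast
  qed (use sn_nonneg[OF box_bounded[OF fs]] in simp)
  then have "(sup_norm X f) ^ 2 \<le> (sqrt (sup_norm X (\<lambda>x. star (f x) * f x))) ^ 2"
    using sn_nonneg[OF box_bounded[OF f]] by (simp add: power_mono)
  then show "(sup_norm X f) ^ 2 \<le> sup_norm X (\<lambda>x. star (f x) * f x)"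
    using sn_nonneg[OF box_bounded[OF fs]] by simp
qed



lemma box_complete:
  fixes S :: "('a::unital_cstar_algebra \<Rightarrow> real) set" and X :: "'x topology"
    and s :: "nat \<Rightarrow> 'x \<Rightarrow> 'a"
  assumes rel: "relaxed_cstar_algebra S"
    and sC: "\<forall>n. s n \<in> boxtimes X S"
    and cau: "\<forall>e>0. \<exists>N. \<forall>m\<ge>N. \<forall>n\<ge>N. sup_norm X (\<lambda>x. s m x + - s n x) < e"
  shows "\<exists>l\<in>boxtimes X S. (\<lambda>n. sup_norm X (\<lambda>x. s n x + - l x)) \<longlonglongrightarrow> 0"
proof -
  have ext: "s n x = 0" if "x \<notin> topspace X" for n x using sC that by (simp add: mem_box)
  have pw: "norm (s m x - s n x) \<le> sup_norm X (\<lambda>x. s m x + - s n x)" for m n x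
  proof -
    have mC: "(\<lambda>x. s m x + - s n x) \<in> boxtimes X S"
      using box_add[OF rel] box_neg[OF rel] sC by blast
    show ?thesis
    proof (cases "x \<in> topspace X")
      case True
      then show ?thesis using sn_ge[OF box_bounded[OF mC] True] by simp
    next
      case False
      then show ?thesis using sn_nonneg[OF box_bounded[OF mC]] ext[OF False] by simp
    qed
  qed
  have cauN: "\<exists>N. \<forall>m\<ge>N. \<forall>n\<ge>N. \<forall>x. norm (s m x - s n x) < e" if e0: "e > 0" for e
  proof -
    obtain N where "\<forall>m\<ge>N. \<forall>n\<ge>N. sup_norm X (\<lambda>x. s m x + - s n x) < e" using cau e0 by blast
    then show ?thesis using pw by (meson le_less_trans)
  qed
  define l where "l x = lim (\<lambda>n. s n x)" for x
  have conv: "(\<lambda>n. s n x) \<longlonglongrightarrow> l x" for x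
  proof -
    have "Cauchy (\<lambda>n. s n x)"
    proof (rule metric_CauchyI)
      fix e :: real assume "e > 0"
      then obtain N where "\<forall>m\<ge>N. \<forall>n\<ge>N. \<forall>x. norm (s m x - s n x) < e" using cauN by blast
      then show "\<exists>M. \<forall>m\<ge>M. \<forall>n\<ge>M. dist (s m x) (s n x) < e" by (auto simp: dist_norm)
    qed
    then show ?thesis unfolding l_def using Cauchy_convergent_iff convergent_LIMSEQ_iff by blast
  qed
  have U: "\<exists>N. \<forall>n\<ge>N. \<forall>x. norm (s n x - l x) \<le> e" if e0: "e > 0" for e
  proof -
    obtain N where N: "\<forall>m\<ge>N. \<forall>n\<ge>N. \<forall>x. norm (s m x - s n x) < e" using cauN e0 by blast
    have "norm (s n x - l x) \<le> e" if "n \<ge> N" for n x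
    proof -
      have "(\<lambda>m. norm (s m x - s n x)) \<longlonglongrightarrow> norm (l x - s n x)"
        by (intro tendsto_norm tendsto_diff conv tendsto_const)
      moreover have "\<exists>M. \<forall>m\<ge>M. norm (s m x - s n x) \<le> e"
        using N that by (meson less_imp_le)
      ultimately have "norm (l x - s n x) \<le> e" by (rule LIMSEQ_le_const2)
      then show ?thesis by (simp add: norm_minus_commute)
    qed
    then show ?thesis by blast
  qed
  have lext: "l x = 0" if "x \<notin> topspace X" for x
  proof -
    have "(\<lambda>n. s n x) \<longlonglongrightarrow> 0" using ext[OF that] by simp
    then show ?thesis using conv[of x] LIMSEQ_unique by blast
  qed
  have lbd: "bounded (l ` topspace X)"
  proof -
    obtain N where N: "\<forall>n\<ge>N. \<forall>x. norm (s n x - l x) \<le> 1" using U[of 1] by auto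
    obtain B where B: "\<And>x. x \<in> topspace X \<Longrightarrow> norm (s N x) \<le> B"
      using bounded_normE box_bounded sC by metis
    show ?thesis
    proof (rule bounded_normI)
      fix x assume "x \<in> topspace X"
      then have "norm (s N x) \<le> B" by (rule B)
      moreover have "norm (s N x - l x) \<le> 1" using N by blast
      ultimately show "norm (l x) \<le> B + 1"
        using norm_triangle_sub[of "l x" "s N x"] norm_minus_commute[of "l x" "s N x"]
        by linarith
    qed
  qed
  have Ssemi: "\<forall>p\<in>S. is_seminorm p" using rel unfolding relaxed_cstar_algebra_def by blast
  have lcm: "continuous_map X (relaxed_topology S) l"
  proof (rule cm_relaxedI)
    fix x F and e :: real
    assume x: "x \<in> topspace X" and F: "finite F" "F \<subseteq> S" and e: "e > 0"
    have "\<forall>p\<in>F. eventually (\<lambda>n. \<forall>y. p (s n y - l y) < e / 3) sequentially"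
    proof
      fix p assume p: "p \<in> F"
      have sp: "is_seminorm p" using p F Ssemi by blast
      have cp: "continuous_on UNIV p" using p F rel unfolding relaxed_cstar_algebra_def by blast
      obtain d where d: "d > 0" "\<forall>z. dist z 0 < d \<longrightarrow> dist (p z) (p 0) < e / 3"
        using cp e unfolding continuous_on_iff by (metis UNIV_I divide_pos_pos zero_less_numeral)
      obtain N where N: "\<forall>n\<ge>N. \<forall>x. norm (s n x - l x) \<le> d / 2" using U[of "d/2"] d by auto
      show "eventually (\<lambda>n. \<forall>y. p (s n y - l y) < e / 3) sequentially"
        unfolding eventually_sequentially
      proof (intro exI[of _ N] allI impI)
        fix n y assume "N \<le> n"
        then have "norm (s n y - l y) \<le> d / 2" using N by blast
        then have "norm (s n y - l y) < d" using d by linarith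
        then have "dist (p (s n y - l y)) (p 0) < e / 3" using d by (simp add: dist_norm)
        then show "p (s n y - l y) < e / 3" using semi_zero[OF sp] by (simp add: dist_real_def)
      qed
    qed
    then have "eventually (\<lambda>n. \<forall>p\<in>F. \<forall>y. p (s n y - l y) < e / 3) sequentially"
      by (rule eventually_ball_finite[OF F(1)])
    then obtain n where n: "\<forall>p\<in>F. \<forall>y. p (s n y - l y) < e / 3"
      unfolding eventually_sequentially by blast
    have scm: "continuous_map X (relaxed_topology S) (s n)" using sC by (simp add: mem_box)
    obtain V where V: "openin X V" "x \<in> V" "\<forall>y\<in>V. \<forall>p\<in>F. p (s n y - s n x) < e / 3"
      using cm_relaxedD[OF scm Ssemi x F] e by (metis divide_pos_pos zero_less_numeral)
    show "\<exists>V. openin X V \<and> x \<in> V \<and> (\<forall>y\<in>V. \<forall>p\<in>F. p (l y - l x) < e)"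
    proof (intro exI[of _ V] conjI ballI)
      fix y p assume y: "y \<in> V" and p: "p \<in> F"
      have sp: "is_seminorm p" using p F Ssemi by blast
      have "p (l y - l x) \<le> p (l y - s n y) + p (s n y - l x)" by (rule semi_tri[OF sp])
      moreover have "p (s n y - l x) \<le> p (s n y - s n x) + p (s n x - l x)" by (rule semi_tri[OF sp])
      moreover have "p (l y - s n y) = p (s n y - l y)" by (rule semi_commute[OF sp])
      moreover have "p (s n y - l y) < e / 3" "p (s n x - l x) < e / 3" using n p by blast+
      moreover have "p (s n y - s n x) < e / 3" using V(3) y p by blast
      ultimately show "p (l y - l x) < e" by linarith
    qed (use V in auto)
  qed
  have lC: "l \<in> boxtimes X S" using lcm lbd lext by (simp add: mem_box)
  have "(\<lambda>n. sup_norm X (\<lambda>x. s n x + - l x)) \<longlonglongrightarrow> 0"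
  proof (rule LIMSEQ_I)
    fix r :: real assume r: "r > 0"
    obtain N where N: "\<forall>n\<ge>N. \<forall>x. norm (s n x - l x) \<le> r / 2" using U[of "r/2"] r by auto
    show "\<exists>no. \<forall>n\<ge>no. norm (sup_norm X (\<lambda>x. s n x + - l x) - 0) < r"
    proof (intro exI[of _ N] allI impI)
      fix n assume n: "N \<le> n"
      have mC: "(\<lambda>x. s n x + - l x) \<in> boxtimes X S"
        using box_add[OF rel] box_neg[OF rel] sC lC by blast
      have "sup_norm X (\<lambda>x. s n x + - l x) \<le> r / 2"
        by (rule sn_le) (use r N n in auto)
      then show "norm (sup_norm X (\<lambda>x. s n x + - l x) - 0) < r"
        using sn_nonneg[OF box_bounded[OF mC]] r by simp
    qed
  qed
  then show ?thesis using lC by blast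
qed



theorem lemma1:
  fixes X :: "'x topology" and S :: "('a::unital_cstar_algebra \<Rightarrow> real) set"
  assumes "compact_space X" and "Hausdorff_space X"
    and "relaxed_cstar_algebra S"
  shows "cstar_algebra_on (boxtimes X S)
           (\<lambda>f g x. f x + g x) (\<lambda>x. 0) (\<lambda>f x. - f x) (\<lambda>c f x. scaleC c (f x))
           (\<lambda>f g x. f x * g x) (\<lambda>f x. star (f x)) (sup_norm X)"
  unfolding cstar_algebra_on_def
  apply (intro conjI)
  subgoal by (rule box_zero[OF assms(3)])
  subgoal using box_add[OF assms(3)] box_mul[OF assms(3)] by blast
  subgoal using box_neg[OF assms(3)] box_star[OF assms(3)] box_scale[OF assms(3)] by blast
  subgoal by (simp add: algebra_simps)
  subgoal by (simp add: add.commute)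
  subgoal by simp
  subgoal by (simp add: scaleC_add_right scaleC_add_left scaleC_scaleC scaleC_one mult_scaleC_left mult_scaleC_right)
  subgoal by (simp add: star_star star_add star_scaleC star_mult)
  subgoal
    apply (intro ballI allI conjI)
    subgoal by (rule sn_zero_iff)
    subgoal by (rule sn_add)
    subgoal by (rule sn_scale, assumption, rule box_scale[OF assms(3)])
    subgoal by (rule sn_mul)
    subgoal by (rule sn_cstar, assumption, intro box_mul[OF assms(3)] box_star[OF assms(3)])
    done
  subgoal using box_complete[OF assms(3)] by blast
  done


end
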